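(* Let $n\ge 1$, $d=2^n$, and let $C=\mathcal{O}(1)$ be a constant. In the minus sign search problem, one is given vectors $x_1,\ldots,x_C\in\mathbb{C}^d$ such that for one unknown index $k^*\in\{1,\ldots,C\}$ we have $x_{k^*}=(-\tfrac{1}{\sqrt d},\tfrac{1}{\sqrt d},\ldots,\tfrac{1}{\sqrt d})$, while $x_i=(\tfrac{1}{\sqrt d},\ldots,\tfrac{1}{\sqrt d})$ for all $i\neq k^*$; the goal is to identify $k^*$. Any quantum algorithm that has access to copies of the $n$-qubit states $|x_1\rangle,\ldots,|x_C\rangle$ (where $|x\rangle=\sum_i x_i|i\rangle$) requires $\Omega(2^n)$ time to solve the minus sign search problem.
   Context: A quantum algorithm with quantum state inputs may request any number of copies of each state $|x_1\rangle,\ldots,|x_C\rangle$, each copy having unit cost, and may then perform arbitrary quantum operations and measurements; its running time is at least the total number of copies it uses. "Solving" the problem means outputting the correct index $k^*$ with probability at least $0.9$, for each possible value of $k^*$. *)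

theory Defs
  imports Complex_Main
begin

text \<open>Computational basis indices of one n-qubit register: {0..<d}, d = 2^n.
  Input states x_1..x_C are indexed by i in {1..C}; kstar is the hidden index.\<close>

definition input_state :: "nat \<Rightarrow> nat \<Rightarrow> nat \<Rightarrow> nat \<Rightarrow> complex" where
  "input_state d kstar i j =
     (if i = kstar \<and> j = 0 then - complex_of_real (1 / sqrt (real d))
      else complex_of_real (1 / sqrt (real d)))"

definition joint_basis :: "nat \<Rightarrow> nat \<Rightarrow> nat list set" where
  "joint_basis d m = {js. length js = m \<and> set js \<subseteq> {0..<d}}"

text \<open>Joint state: copy t (t < m) is a copy of the state with label s t.
  The amplitude of basis tuple js is the product of the individual amplitudes
  (tensor product).\<close>
definition joint_state ::
  "nat \<Rightarrow> nat \<Rightarrow> (nat \<Rightarrow> nat) \<Rightarrow> nat \<Rightarrow> nat list \<Rightarrow> complex" where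
  "joint_state d m s kstar js = (\<Prod>t<m. input_state d kstar (s t) (js ! t))"

definition qform :: "'a set \<Rightarrow> ('a \<Rightarrow> 'a \<Rightarrow> complex) \<Rightarrow> ('a \<Rightarrow> complex) \<Rightarrow> complex" where
  "qform I A v = (\<Sum>a\<in>I. \<Sum>b\<in>I. cnj (v a) * A a b * v b)"

definition psd_op :: "'a set \<Rightarrow> ('a \<Rightarrow> 'a \<Rightarrow> complex) \<Rightarrow> bool" where
  "psd_op I A \<longleftrightarrow> (\<forall>v. Im (qform I A v) = 0 \<and> Re (qform I A v) \<ge> 0)"

definition is_povm :: "'a set \<Rightarrow> 'o set \<Rightarrow> ('o \<Rightarrow> 'a \<Rightarrow> 'a \<Rightarrow> complex) \<Rightarrow> bool" where
  "is_povm I Outs E \<longleftrightarrow>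
     (\<forall>k\<in>Outs. psd_op I (E k)) \<and>
     (\<forall>a\<in>I. \<forall>b\<in>I. (\<Sum>k\<in>Outs. E k a b) = (if a = b then 1 else 0))"

definition outcome_prob ::
  "'a set \<Rightarrow> ('o \<Rightarrow> 'a \<Rightarrow> 'a \<Rightarrow> complex) \<Rightarrow> ('a \<Rightarrow> complex) \<Rightarrow> 'o \<Rightarrow> real" where
  "outcome_prob I E psi k = Re (qform I (E k) psi)"

text \<open>An algorithm using m copies in total (copy t being a copy of |x_{s t}>) followed by
  the most general measurement (a POVM with outcomes 1..C, the guessed index)
  solves minus sign search if it outputs kstar with probability >= 0.9 for every kstar.\<close>
definition solves_minus_sign_search ::
  "nat \<Rightarrow> nat \<Rightarrow> nat \<Rightarrow> (nat \<Rightarrow> nat) \<Rightarrow> (nat \<Rightarrow> nat list \<Rightarrow> nat list \<Rightarrow> complex) \<Rightarrow> bool" where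
  "solves_minus_sign_search C n m s E \<longleftrightarrow>
     (\<forall>t<m. s t \<in> {1..C}) \<and>
     is_povm (joint_basis (2^n) m) {1..C} E \<and>
     (\<forall>kstar\<in>{1..C}.
        outcome_prob (joint_basis (2^n) m) E (joint_state (2^n) m s kstar) kstar \<ge> 0.9)"

end

theory Submission
  imports Defs
begin

lemma jb_finite: "finite (joint_basis d m)"
proof -
  have "joint_basis d m = {xs. set xs \<subseteq> {0..<d} \<and> length xs = m}"
    unfolding joint_basis_def by auto
  thus ?thesis using finite_lists_length_eq[of "{0..<d}" m] by simp
qed

lemma jb_0: "joint_basis d 0 = {[]}"
  unfolding joint_basis_def by auto

lemma jb_Suc: "joint_basis d (Suc m) = (\<lambda>(j,xs). j#xs) ` ({0..<d} \<times> joint_basis d m)"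
  unfolding joint_basis_def
  by (auto simp: length_Suc_conv image_iff)

lemma sum_prod_lists:
  fixes f :: "nat \<Rightarrow> nat \<Rightarrow> 'a::comm_semiring_1"
  shows "(\<Sum>js\<in>joint_basis d m. \<Prod>t<m. f t (js!t)) = (\<Prod>t<m. \<Sum>j\<in>{0..<d}. f t j)"
proof (induction m arbitrary: f)
  case 0
  then show ?case by (simp add: jb_0)
next
  case (Suc m)
  have inj: "inj_on (\<lambda>(j,xs). j#xs) ({0..<d} \<times> joint_basis d m)"
    by (auto simp: inj_on_def)
  have "(\<Sum>js\<in>joint_basis d (Suc m). \<Prod>t<Suc m. f t (js!t))
      = (\<Sum>p\<in>{0..<d} \<times> joint_basis d m. \<Prod>t<Suc m. f t ((case p of (j,xs) \<Rightarrow> j#xs)!t))"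
    unfolding jb_Suc by (subst sum.reindex[OF inj]) (simp add: comp_def)
  also have "\<dots> = (\<Sum>j\<in>{0..<d}. \<Sum>xs\<in>joint_basis d m. f 0 j * (\<Prod>t<m. f (Suc t) (xs!t)))"
    proof -
    have "(\<Sum>p\<in>{0..<d} \<times> joint_basis d m. \<Prod>t<Suc m. f t ((case p of (j,xs) \<Rightarrow> j#xs)!t))
       = (\<Sum>p\<in>{0..<d} \<times> joint_basis d m. f 0 (fst p) * (\<Prod>t<m. f (Suc t) (snd p!t)))"
      by (intro sum.cong refl) (auto simp only: prod.lessThan_Suc_shift nth_Cons_0 nth_Cons_Suc fst_conv snd_conv split: prod.splits)
    also have "\<dots> = (\<Sum>j\<in>{0..<d}. \<Sum>xs\<in>joint_basis d m. f 0 j * (\<Prod>t<m. f (Suc t) (xs!t)))"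
      by (simp add: sum.cartesian_product split_def)
    finally show ?thesis .
  qed
  also have "\<dots> = (\<Sum>j\<in>{0..<d}. f 0 j * (\<Prod>t<m. \<Sum>j'\<in>{0..<d}. f (Suc t) j'))"
    by (simp add: sum_distrib_left[symmetric] Suc.IH[of "\<lambda>t. f (Suc t)"])
  also have "\<dots> = (\<Prod>t<Suc m. \<Sum>j\<in>{0..<d}. f t j)"
    by (simp only: prod.lessThan_Suc_shift sum_distrib_right)
  finally show ?case .
qed

definition cross :: "'a set \<Rightarrow> ('a \<Rightarrow> 'a \<Rightarrow> complex) \<Rightarrow> ('a \<Rightarrow> complex) \<Rightarrow> ('a \<Rightarrow> complex) \<Rightarrow> complex" where
  "cross I A v w = (\<Sum>a\<in>I. \<Sum>b\<in>I. cnj (v a) * A a b * w b)"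

lemma qform_cross:
  fixes \<alpha> \<beta> :: real
  shows "qform I A (\<lambda>x. of_real \<alpha> * v x - of_real \<beta> * w x) =
     of_real (\<alpha>^2) * qform I A v + of_real (\<beta>^2) * qform I A w
     - of_real (\<alpha>*\<beta>) * (cross I A v w + cross I A w v)"
  unfolding qform_def cross_def
  by (simp add: sum_distrib_left sum.distrib[symmetric] sum_subtractf[symmetric] algebra_simps power2_eq_square)

lemma psd_cross:
  fixes \<alpha> \<beta> :: real
  assumes "psd_op I A"
  shows "\<alpha>*\<beta> * Re (cross I A v w + cross I A w v) \<le> \<alpha>^2 * Re (qform I A v) + \<beta>^2 * Re (qform I A w)"
proof -
  have "Re (qform I A (\<lambda>x. of_real \<alpha> * v x - of_real \<beta> * w x)) \<ge> 0"
    using assms unfolding psd_op_def by blast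
  thus ?thesis unfolding qform_cross by simp
qed

lemma povm_cross:
  assumes "finite I" "\<forall>a\<in>I. \<forall>b\<in>I. (\<Sum>k\<in>Os. E k a b) = (if a = b then 1 else 0)"
  shows "(\<Sum>k\<in>Os. cross I (E k) v w) = (\<Sum>a\<in>I. cnj (v a) * w a)"
proof -
  have "(\<Sum>k\<in>Os. cross I (E k) v w) = (\<Sum>a\<in>I. \<Sum>b\<in>I. cnj (v a) * (\<Sum>k\<in>Os. E k a b) * w b)"
    unfolding cross_def
    by (simp add: sum_distrib_left sum_distrib_right sum.swap[of _ Os])
  also have "\<dots> = (\<Sum>a\<in>I. \<Sum>b\<in>I. if a = b then cnj (v a) * w b else 0)"
    using assms(2) by (intro sum.cong refl) auto
  also have "\<dots> = (\<Sum>a\<in>I. cnj (v a) * w a)"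
    using assms(1) by simp
  finally show ?thesis .
qed

definition rho :: "nat \<Rightarrow> nat \<Rightarrow> nat \<Rightarrow> nat \<Rightarrow> real" where
  "rho d k i j = (if i = k \<and> j = 0 then - (1 / sqrt (real d)) else 1 / sqrt (real d))"

lemma input_rho: "input_state d k i j = of_real (rho d k i j)"
  unfolding input_state_def rho_def by simp

lemma rho_sq: "d > 0 \<Longrightarrow> rho d k1 i j * rho d k2 i j = (if rho d k1 i j = rho d k2 i j then 1 / real d else - (1 / real d))"
  unfolding rho_def by (auto simp: real_sqrt_mult[symmetric])

lemma inner_joint:
  "(\<Sum>a\<in>joint_basis d m. cnj (joint_state d m s k1 a) * joint_state d m s k2 a)
   = of_real (\<Prod>t<m. \<Sum>j\<in>{0..<d}. rho d k1 (s t) j * rho d k2 (s t) j)"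
proof -
  have "(\<Sum>a\<in>joint_basis d m. cnj (joint_state d m s k1 a) * joint_state d m s k2 a)
      = (\<Sum>a\<in>joint_basis d m. \<Prod>t<m. cnj (input_state d k1 (s t) (a!t)) * input_state d k2 (s t) (a!t))"
    unfolding joint_state_def by (simp add: prod.distrib)
  also have "\<dots> = (\<Prod>t<m. \<Sum>j\<in>{0..<d}. cnj (input_state d k1 (s t) j) * input_state d k2 (s t) j)"
    by (rule sum_prod_lists)
  also have "\<dots> = of_real (\<Prod>t<m. \<Sum>j\<in>{0..<d}. rho d k1 (s t) j * rho d k2 (s t) j)"
    by (simp add: input_rho)
  finally show ?thesis .
qed

lemma factor_self: "d > 0 \<Longrightarrow> (\<Sum>j\<in>{0..<d}. rho d k i j * rho d k i j) = 1"
  by (simp add: rho_sq)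

lemma factor_lb:
  assumes "d > 0"
  shows "(\<Sum>j\<in>{0..<d}. rho d k1 i j * rho d k2 i j) \<ge> 1 - 2 / real d"
proof -
  have "(\<Sum>j\<in>{0..<d}. rho d k1 i j * rho d k2 i j) \<ge> (\<Sum>j\<in>{0..<d}. if j = 0 then - (1 / real d) else 1 / real d)"
    using assms by (intro sum_mono) (auto simp: rho_sq rho_def)
  also have "(\<Sum>j\<in>{0..<d}. if j = 0 then - (1 / real d) else 1 / real d)
      = (\<Sum>j\<in>{0..<d}. 1 / real d) - 2 / real d"
  proof -
    have "(\<Sum>j\<in>{0..<d}. if j = 0 then - (1 / real d) else 1 / real d)
        = (\<Sum>j\<in>{0..<d}. 1 / real d - (if j = 0 then 2 / real d else 0))"
      by (intro sum.cong refl) auto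
    also have "\<dots> = (\<Sum>j\<in>{0..<d}. 1 / real d) - 2 / real d"
      using assms by (simp add: sum_subtractf)
    finally show ?thesis .
  qed
  also have "(\<Sum>j\<in>{0..<d}. 1 / real d) = 1" using assms by simp
  finally show ?thesis by simp
qed

theorem proposition2:
  fixes C :: nat
  assumes "C \<ge> 2"
  shows "\<exists>c>0. \<forall>n\<ge>1. \<forall>m s E.
           solves_minus_sign_search C n m s E \<longrightarrow> real m \<ge> c * 2 ^ n"
proof (intro exI[of _ "1/5"] conjI allI impI)
  fix n m s E
  assume n1: "(1::nat) \<le> n" and sol: "solves_minus_sign_search C n m s E"
  define d :: nat where "d = 2^n"
  have "(2::nat)^1 \<le> 2^n" by (rule power_increasing[OF n1]) simp
  hence d2: "d \<ge> 2" unfolding d_def by simp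
  hence dpos: "d > 0" by simp
  define I where "I = joint_basis d m"
  define \<psi> where "\<psi> = joint_state d m s"
  have fin: "finite I" unfolding I_def by (rule jb_finite)
  have psd: "\<And>k. k \<in> {1..C} \<Longrightarrow> psd_op I (E k)"
    and povm: "\<forall>a\<in>I. \<forall>b\<in>I. (\<Sum>k\<in>{1..C}. E k a b) = (if a = b then 1 else 0)"
    and succ: "\<And>k. k \<in> {1..C} \<Longrightarrow> Re (qform I (E k) (\<psi> k)) \<ge> 0.9"
    using sol unfolding solves_minus_sign_search_def is_povm_def outcome_prob_def I_def \<psi>_def d_def
    by auto
  have qc: "\<And>A v. qform I A v = cross I A v v" unfolding qform_def cross_def by simp
  define a where "a k = Re (qform I (E k) (\<psi> 1))" for k
  define b where "b k = Re (qform I (E k) (\<psi> 2))" for k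
  define S where "S k = Re (cross I (E k) (\<psi> 1) (\<psi> 2) + cross I (E k) (\<psi> 2) (\<psi> 1))" for k
  define P where "P = (\<Prod>t<m. \<Sum>j\<in>{0..<d}. rho d 1 (s t) j * rho d 2 (s t) j)"
  define P' where "P' = (\<Prod>t<m. \<Sum>j\<in>{0..<d}. rho d 2 (s t) j * rho d 1 (s t) j)"
  have P'P: "P' = P" unfolding P_def P'_def by (simp add: mult.commute)
  have a0: "\<And>k. k \<in> {1..C} \<Longrightarrow> a k \<ge> 0" unfolding a_def using psd psd_op_def by blast
  have b0: "\<And>k. k \<in> {1..C} \<Longrightarrow> b k \<ge> 0" unfolding b_def using psd psd_op_def by blast
  have norm: "\<And>k. (\<Sum>x\<in>I. cnj (\<psi> k x) * \<psi> k x) = 1"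
    unfolding I_def \<psi>_def inner_joint factor_self[OF dpos] by simp
  have suma: "(\<Sum>k\<in>{1..C}. a k) = 1"
    unfolding a_def qc using povm_cross[OF fin povm, of "\<psi> 1" "\<psi> 1"] norm
    by (metis Re_sum one_complex.sel)
  have sumb: "(\<Sum>k\<in>{1..C}. b k) = 1"
    unfolding b_def qc using povm_cross[OF fin povm, of "\<psi> 2" "\<psi> 2"] norm
    by (metis Re_sum one_complex.sel)
  have sumS: "(\<Sum>k\<in>{1..C}. S k) = 2 * P"
  proof -
    have "(\<Sum>k\<in>{1..C}. S k) = Re ((\<Sum>k\<in>{1..C}. cross I (E k) (\<psi> 1) (\<psi> 2)) + (\<Sum>k\<in>{1..C}. cross I (E k) (\<psi> 2) (\<psi> 1)))"
      unfolding S_def by (simp add: sum.distrib Re_sum)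
    also have "\<dots> = P + P'"
      unfolding povm_cross[OF fin povm] unfolding I_def \<psi>_def inner_joint P_def P'_def by (simp only: of_real_add[symmetric] Re_complex_of_real)
    finally show ?thesis using P'P by simp
  qed
  have a1: "a 1 \<ge> 0.9" unfolding a_def using succ[of 1] assms by auto
  have b2: "b 2 \<ge> 0.9" unfolding b_def using succ[of 2] assms by auto
  have split: "\<And>f::nat\<Rightarrow>real. (\<Sum>k\<in>{1..C}. f k) = f 1 + (\<Sum>k\<in>{2..C}. f k)"
  proof -
    fix f :: "nat \<Rightarrow> real"
    have "{1..C} = insert 1 {2..C}" using assms by auto
    thus "(\<Sum>k\<in>{1..C}. f k) = f 1 + (\<Sum>k\<in>{2..C}. f k)" by simp
  qed
  have b2le: "b 2 \<le> (\<Sum>k\<in>{2..C}. b k)"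
    using assms b0 by (intro member_le_sum) auto
  have S1: "1 * 3 * S 1 \<le> 1^2 * a 1 + 3^2 * b 1"
    unfolding S_def a_def b_def using psd_cross[OF psd[of 1], of 1 3 "\<psi> 1" "\<psi> 2"] assms by auto
  have S2: "3 * S k \<le> 9 * a k + b k" if "k \<in> {2..C}" for k
    using psd_cross[OF psd[of k], of 3 1 "\<psi> 1" "\<psi> 2"] that
    unfolding S_def a_def b_def by auto
  have S2s: "3 * (\<Sum>k\<in>{2..C}. S k) \<le> 9 * (\<Sum>k\<in>{2..C}. a k) + (\<Sum>k\<in>{2..C}. b k)"
  proof -
    have "3 * (\<Sum>k\<in>{2..C}. S k) = (\<Sum>k\<in>{2..C}. 3 * S k)" by (simp add: sum_distrib_left)
    also have "\<dots> \<le> (\<Sum>k\<in>{2..C}. 9 * a k + b k)" using S2 by (rule sum_mono)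
    also have "\<dots> = 9 * (\<Sum>k\<in>{2..C}. a k) + (\<Sum>k\<in>{2..C}. b k)" by (simp add: sum.distrib sum_distrib_left)
    finally show ?thesis .
  qed
  have Ple: "P \<le> 0.6"
    using split[of a] split[of b] split[of S] suma sumb sumS S1 S2s a1 b2 b2le by simp
  have Pge: "P \<ge> (1 - 2 / real d) ^ m"
  proof -
    have "(\<Prod>t<m. (1 - 2 / real d)) \<le> P"
      unfolding P_def using d2 factor_lb[OF dpos]
      by (intro prod_mono) (auto simp: field_simps)
    thus ?thesis by simp
  qed
  have "1 + real m * (- (2 / real d)) \<le> (1 + (- (2 / real d))) ^ m"
    using d2 by (intro Bernoulli_inequality) (auto simp: field_simps)
  hence "1 - 2 * real m / real d \<le> 0.6" using Pge Ple by simp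
  hence "real d \<le> 5 * real m" using dpos by (simp add: field_simps)
  thus "1 / 5 * 2 ^ n \<le> real m" unfolding d_def by simp
qed simp

end
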